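(* Let $R$ be a commutative multiplicative hyperring with identity, let $\alpha$ be a good endomorphism of $R$, and let $I$ be an $\alpha$-prime hyperideal of $R$. If $x\in R$ and $x^n\subseteq I$ for some $n\in\mathbb N$, then $\alpha(x)\in I$.
   Context: A multiplicative hyperring is an abelian group $(R,+)$ with a hyperoperation $\circ:R\times R\to \mathcal P^*(R)$ (nonempty subsets) such that $a\circ(b\circ c)=(a\circ b)\circ c$, $a\circ(b+c)\subseteq a\circ b+a\circ c$, $(b+c)\circ a\subseteq b\circ a+c\circ a$, and $a\circ(-b)=(-a)\circ b=-(a\circ b)$. Products of subsets are unions of elementwise products, and $x^n=x\circ\cdots\circ x$ ($n$ factors). Commutative means $a\circ b=b\circ a$. An identity $1$ satisfies $a\in1\circ a$ for all $a$. A hyperideal is a nonempty $I\subseteq R$ closed under subtraction with $r\circ x\subseteq I$ for $r\in R$, $x\in I$. Standing assumption: every hyperideal is a $\mathbf C$-hyperideal, i.e. for every finite product $A=r_1\circ\cdots\circ r_n$, $A\cap I\ne\emptyset$ implies $A\subseteq I$. A good endomorphism $\alpha$ satisfies $\alpha(x+y)=\alpha(x)+\alpha(y)$ and $\alpha(x\circ y)=\alpha(x)\circ\alpha(y)$. A hyperideal $I$ is $\alpha$-prime if for all $x,y$, $x\circ y\subseteq I$ implies $x\in I$ or $\alpha(y)\in I$. *)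

theory Defs
  imports Main
begin

text \<open>A multiplicative hyperring: the abelian group (R,+) is the ambient type
  'a :: ab_group_add, and the hyperoperation is m :: 'a => 'a => 'a set.\<close>

definition hset_prod :: "('a \<Rightarrow> 'a \<Rightarrow> 'a set) \<Rightarrow> 'a set \<Rightarrow> 'a set \<Rightarrow> 'a set" where
  "hset_prod m A B = (\<Union>a\<in>A. \<Union>b\<in>B. m a b)"

definition set_add :: "'a::ab_group_add set \<Rightarrow> 'a set \<Rightarrow> 'a set" where
  "set_add A B = {x + y | x y. x \<in> A \<and> y \<in> B}"

definition mult_hyperring :: "('a::ab_group_add \<Rightarrow> 'a \<Rightarrow> 'a set) \<Rightarrow> bool" where
  "mult_hyperring m \<longleftrightarrow>
     (\<forall>a b. m a b \<noteq> {}) \<and>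
     (\<forall>a b c. hset_prod m {a} (m b c) = hset_prod m (m a b) {c}) \<and>
     (\<forall>a b c. m a (b + c) \<subseteq> set_add (m a b) (m a c)) \<and>
     (\<forall>a b c. m (b + c) a \<subseteq> set_add (m b a) (m c a)) \<and>
     (\<forall>a b. m a (- b) = uminus ` (m a b) \<and> m (- a) b = uminus ` (m a b))"

definition hcomm :: "('a \<Rightarrow> 'a \<Rightarrow> 'a set) \<Rightarrow> bool" where
  "hcomm m \<longleftrightarrow> (\<forall>a b. m a b = m b a)"

definition has_identity :: "('a \<Rightarrow> 'a \<Rightarrow> 'a set) \<Rightarrow> bool" where
  "has_identity m \<longleftrightarrow> (\<exists>e. \<forall>a. a \<in> m e a)"

text \<open>hpow_aux m x k = x^(k+1) (k+1 factors).\<close>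
primrec hpow_aux :: "('a \<Rightarrow> 'a \<Rightarrow> 'a set) \<Rightarrow> 'a \<Rightarrow> nat \<Rightarrow> 'a set" where
  "hpow_aux m x 0 = {x}"
| "hpow_aux m x (Suc k) = hset_prod m (hpow_aux m x k) {x}"

text \<open>hpow m x n = x^n for n >= 1 (n factors).\<close>
definition hpow :: "('a \<Rightarrow> 'a \<Rightarrow> 'a set) \<Rightarrow> 'a \<Rightarrow> nat \<Rightarrow> 'a set" where
  "hpow m x n = hpow_aux m x (n - 1)"

fun hlist_prod :: "('a \<Rightarrow> 'a \<Rightarrow> 'a set) \<Rightarrow> 'a list \<Rightarrow> 'a set" where
  "hlist_prod m [] = {}"
| "hlist_prod m [r] = {r}"
| "hlist_prod m (r # rs) = hset_prod m {r} (hlist_prod m rs)"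

definition hyperideal :: "('a::ab_group_add \<Rightarrow> 'a \<Rightarrow> 'a set) \<Rightarrow> 'a set \<Rightarrow> bool" where
  "hyperideal m I \<longleftrightarrow> I \<noteq> {} \<and> (\<forall>x\<in>I. \<forall>y\<in>I. x - y \<in> I) \<and>
     (\<forall>r. \<forall>x\<in>I. m r x \<subseteq> I)"

definition C_hyperideal :: "('a::ab_group_add \<Rightarrow> 'a \<Rightarrow> 'a set) \<Rightarrow> 'a set \<Rightarrow> bool" where
  "C_hyperideal m I \<longleftrightarrow> hyperideal m I \<and>
     (\<forall>rs. rs \<noteq> [] \<longrightarrow> hlist_prod m rs \<inter> I \<noteq> {} \<longrightarrow> hlist_prod m rs \<subseteq> I)"

definition good_endo :: "('a::ab_group_add \<Rightarrow> 'a \<Rightarrow> 'a set) \<Rightarrow> ('a \<Rightarrow> 'a) \<Rightarrow> bool" where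
  "good_endo m \<alpha> \<longleftrightarrow> (\<forall>x y. \<alpha> (x + y) = \<alpha> x + \<alpha> y) \<and>
     (\<forall>x y. \<alpha> ` (m x y) = m (\<alpha> x) (\<alpha> y))"

definition alpha_prime :: "('a::ab_group_add \<Rightarrow> 'a \<Rightarrow> 'a set) \<Rightarrow> ('a \<Rightarrow> 'a) \<Rightarrow> 'a set \<Rightarrow> bool" where
  "alpha_prime m \<alpha> I \<longleftrightarrow> hyperideal m I \<and>
     (\<forall>x y. m x y \<subseteq> I \<longrightarrow> x \<in> I \<or> \<alpha> y \<in> I)"

end

theory Submission
  imports Defs
begin

lemma base_case:
  assumes "hcomm m" and "has_identity m" and "alpha_prime m \<alpha> I" and "x \<in> I"
  shows "\<alpha> x \<in> I"
proof -
  obtain e where e: "\<And>a. a \<in> m e a" using assms(2) unfolding has_identity_def by blast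
  have hI: "hyperideal m I" using assms(3) unfolding alpha_prime_def by blast
  have "m e x \<subseteq> I" using hI assms(4) unfolding hyperideal_def by blast
  then have "e \<in> I \<or> \<alpha> x \<in> I" using assms(3) unfolding alpha_prime_def by blast
  moreover have "e \<in> I \<Longrightarrow> \<alpha> x \<in> I"
  proof -
    assume "e \<in> I"
    then have "m (\<alpha> x) e \<subseteq> I" using hI unfolding hyperideal_def by blast
    moreover have "m (\<alpha> x) e = m e (\<alpha> x)" using assms(1) unfolding hcomm_def by blast
    ultimately show ?thesis using e by blast
  qed
  ultimately show ?thesis by blast
qed

lemma aux:
  assumes "hcomm m" and "has_identity m" and "alpha_prime m \<alpha> I"
  shows "hpow_aux m x k \<subseteq> I \<Longrightarrow> \<alpha> x \<in> I"
proof (induction k)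
  case 0
  then show ?case using base_case[OF assms] by simp
next
  case (Suc k)
  show ?case
  proof (rule ccontr)
    assume na: "\<alpha> x \<notin> I"
    have "hpow_aux m x k \<subseteq> I"
    proof
      fix y assume "y \<in> hpow_aux m x k"
      then have "m y x \<subseteq> I" using Suc.prems by (auto simp: hset_prod_def)
      then show "y \<in> I" using na assms(3) unfolding alpha_prime_def by blast
    qed
    then show False using Suc.IH na by blast
  qed
qed

theorem mainTheorem8:
  fixes m :: "'a::ab_group_add \<Rightarrow> 'a \<Rightarrow> 'a set"
    and \<alpha> :: "'a \<Rightarrow> 'a" and I :: "'a set" and x :: 'a and n :: nat
  assumes "mult_hyperring m" and "hcomm m" and "has_identity m"
    and "\<forall>J. hyperideal m J \<longrightarrow> C_hyperideal m J"
    and "good_endo m \<alpha>" and "alpha_prime m \<alpha> I"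
    and "n \<ge> 1" and "hpow m x n \<subseteq> I"
  shows "\<alpha> x \<in> I"
  using aux[OF assms(2,3,6)] assms(8) unfolding hpow_def by blast

end
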